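(* Let $\Gamma\in(0,1]$, $d_0\in(0,1)$, $r=1-\Gamma+\Gamma d_0$, and let $(b(t),d(t))$ be the solution of $\dot b=d$, $\dot d=\frac{\Gamma d}{1-\Gamma b}(1-b-d)-d$ with $b(0)=0$, $d(0)=d_0$, and $a(t)=b(t)+d(t)$. For every $\beta$ with $d_0\le\beta<d_0/r$, $$\inf\{t\ge0:\ a(t)\ge\beta\}=T(\beta,d_0,\Gamma):=\frac1r\ln\!\Big(\frac{1-r}{1-\frac{\beta}{d_0}r}\Big),$$ and $a(T(\beta,d_0,\Gamma))=\beta$. No finite time achieves $a(t)\ge\beta$ if $\beta\ge d_0/r$.
   Context: This o.d.e.\ is the HILT fluid limit for thresholds uniform on $[0,1]$; $a(t)$ is the fraction of destinations at time $t$. *)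

theory Defs
  imports "HOL-Analysis.Analysis"
begin

definition hilt_r :: "real \<Rightarrow> real \<Rightarrow> real" where
  "hilt_r \<Gamma> d0 = 1 - \<Gamma> + \<Gamma> * d0"

definition hilt_T :: "real \<Rightarrow> real \<Rightarrow> real \<Rightarrow> real" where
  "hilt_T \<beta> d0 \<Gamma> = (1 / hilt_r \<Gamma> d0) *
     ln ((1 - hilt_r \<Gamma> d0) / (1 - (\<beta> / d0) * hilt_r \<Gamma> d0))"

end

theory Submission
  imports Defs
begin

theorem theorem6:
  fixes \<Gamma> d0 :: real and b d :: "real \<Rightarrow> real"
  assumes G: "0 < \<Gamma>" "\<Gamma> \<le> 1"
    and d0: "0 < d0" "d0 < 1"
    and b0: "b 0 = 0" and dd0: "d 0 = d0"
    and denom: "\<And>t. t \<ge> 0 \<Longrightarrow> 1 - \<Gamma> * b t \<noteq> 0"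
    and ode_b: "\<And>t. t \<ge> 0 \<Longrightarrow> (b has_real_derivative d t) (at t within {0..})"
    and ode_d: "\<And>t. t \<ge> 0 \<Longrightarrow>
       (d has_real_derivative
          (\<Gamma> * d t / (1 - \<Gamma> * b t) * (1 - b t - d t) - d t)) (at t within {0..})"
  shows "(\<forall>\<beta>. d0 \<le> \<beta> \<and> \<beta> < d0 / hilt_r \<Gamma> d0 \<longrightarrow>
            Inf {t. t \<ge> 0 \<and> b t + d t \<ge> \<beta>} = hilt_T \<beta> d0 \<Gamma> \<and>
            b (hilt_T \<beta> d0 \<Gamma>) + d (hilt_T \<beta> d0 \<Gamma>) = \<beta>)
       \<and> (\<forall>\<beta>. \<beta> \<ge> d0 / hilt_r \<Gamma> d0 \<longrightarrow>
            (\<forall>t\<ge>0. b t + d t < \<beta>))"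
proof -
  define r where "r = hilt_r \<Gamma> d0"
  have r1: "1 - r = \<Gamma> * (1 - d0)" unfolding r_def hilt_r_def by algebra
  have rlt: "r < 1" proof - have "0 < \<Gamma> * (1 - d0)" using G d0 by simp thus ?thesis using r1 by linarith qed
  have rpos: "0 < r"
  proof -
    have "\<Gamma> * (1 - d0) < 1 * 1" using G d0 by (intro mult_le_less_imp_less) auto
    thus ?thesis using r1 by simp
  qed
  have inv: "\<forall>t\<in>{0..}. 1 - b t - d t = (1 - d0) * (1 - \<Gamma> * b t)"
  proof -
    have "\<exists>c. \<forall>t\<in>{0::real..}. (1 - b t - d t) / (1 - \<Gamma> * b t) = c"
    proof (rule has_field_derivative_zero_constant)
      show "convex {0::real..}" by (simp add: convex_real_interval)
    next
      fix t :: real assume "t \<in> {0..}"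
      hence t: "t \<ge> 0" by simp
      have u: "1 - \<Gamma> * b t \<noteq> 0" using denom t .
      have N: "((\<lambda>t. 1 - b t - d t) has_real_derivative
          (0 - d t - (\<Gamma> * d t / (1 - \<Gamma> * b t) * (1 - b t - d t) - d t))) (at t within {0..})"
        by (intro DERIV_diff DERIV_const ode_b ode_d t)
      have U: "((\<lambda>t. 1 - \<Gamma> * b t) has_real_derivative (0 - \<Gamma> * d t)) (at t within {0..})"
        by (intro DERIV_diff DERIV_const DERIV_cmult ode_b t)
      have Q: "((\<lambda>t. (1 - b t - d t) / (1 - \<Gamma> * b t)) has_real_derivative
          (((0 - d t - (\<Gamma> * d t / (1 - \<Gamma> * b t) * (1 - b t - d t) - d t)) * (1 - \<Gamma> * b t)
            - (1 - b t - d t) * (0 - \<Gamma> * d t)) / ((1 - \<Gamma> * b t) * (1 - \<Gamma> * b t))))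
           (at t within {0..})"
        by (rule DERIV_divide[OF N U u])
      have "((0 - d t - (\<Gamma> * d t / (1 - \<Gamma> * b t) * (1 - b t - d t) - d t)) * (1 - \<Gamma> * b t)
            - (1 - b t - d t) * (0 - \<Gamma> * d t)) = 0"
        using u by (simp add: field_simps)
      with Q show "((\<lambda>t. (1 - b t - d t) / (1 - \<Gamma> * b t)) has_real_derivative 0) (at t within {0..})"
        by simp
    qed
    then obtain c where c: "\<forall>t\<in>{0::real..}. (1 - b t - d t) / (1 - \<Gamma> * b t) = c" by blast
    have "c = 1 - d0" using c[rule_format, of 0] b0 dd0 by simp
    show ?thesis
    proof
      fix t :: real assume t: "t \<in> {0..}"
      have u: "1 - \<Gamma> * b t \<noteq> 0" using denom t by simp
      have "(1 - b t - d t) / (1 - \<Gamma> * b t) = 1 - d0" using c t \<open>c = 1 - d0\<close> by simp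
      thus "1 - b t - d t = (1 - d0) * (1 - \<Gamma> * b t)" using u by (simp add: field_simps)
    qed
  qed
  have bsol: "\<forall>t\<in>{0..}. b t = d0 / r - d0 / r * exp (- r * t)"
  proof -
    have "\<exists>c. \<forall>t\<in>{0::real..}. (b t - d0 / r) * exp (r * t) = c"
    proof (rule has_field_derivative_zero_constant)
      show "convex {0::real..}" by (simp add: convex_real_interval)
    next
      fix t :: real assume "t \<in> {0..}"
      hence t: "t \<ge> 0" by simp
      have E: "((\<lambda>t. exp (r * t)) has_real_derivative (exp (r * t) * (r * 1))) (at t within {0..})"
        by (intro DERIV_chain2[OF DERIV_exp] DERIV_cmult DERIV_ident)
      have B: "((\<lambda>t. b t - d0 / r) has_real_derivative (d t - 0)) (at t within {0..})"
        by (intro DERIV_diff DERIV_const ode_b t)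
      have P: "((\<lambda>t. (b t - d0 / r) * exp (r * t)) has_real_derivative
          ((d t - 0) * exp (r * t) + exp (r * t) * (r * 1) * (b t - d0 / r))) (at t within {0..})"
        by (rule DERIV_mult'[OF B E, THEN DERIV_cong]) (simp add: algebra_simps)
      have i: "1 - b t - d t = (1 - d0) * (1 - \<Gamma> * b t)" using inv t by simp
      have "(1 - d0) * (1 - \<Gamma> * b t) = (1 - d0) - (1 - r) * b t" unfolding r1 by (simp add: algebra_simps)
      hence dt: "d t = d0 - r * b t" using i by (simp add: algebra_simps)
      have "(d t - 0) * exp (r * t) + exp (r * t) * (r * 1) * (b t - d0 / r) = 0"
        using rpos by (simp add: dt field_simps)
      with P show "((\<lambda>t. (b t - d0 / r) * exp (r * t)) has_real_derivative 0) (at t within {0..})"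
        by simp
    qed
    then obtain c where c: "\<forall>t\<in>{0::real..}. (b t - d0 / r) * exp (r * t) = c" by blast
    have c0: "c = - d0 / r" using c[rule_format, of 0] b0 by simp
    show ?thesis
    proof
      fix t :: real assume t: "t \<in> {0..}"
      have "(b t - d0 / r) * exp (r * t) = - d0 / r" using c t c0 by simp
      moreover have EE: "exp (r * t) * exp (- r * t) = 1" by (simp add: exp_add[symmetric])
      have "b t - d0 / r = (b t - d0 / r) * exp (r * t) * exp (- r * t)"
        using EE by (simp add: mult.assoc)
      ultimately have "b t - d0 / r = - d0 / r * exp (- r * t)" by simp
      thus "b t = d0 / r - d0 / r * exp (- r * t)" by simp
    qed
  qed
  have asol: "\<And>t. t \<ge> 0 \<Longrightarrow> b t + d t = d0 / r * (1 - (1 - r) * exp (- r * t))"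
  proof -
    fix t :: real assume t: "t \<ge> 0"
    have i: "1 - b t - d t = (1 - d0) * (1 - \<Gamma> * b t)" using inv t by simp
    have "(1 - d0) * (1 - \<Gamma> * b t) = (1 - d0) - (1 - r) * b t" unfolding r1 by (simp add: algebra_simps)
    hence "b t + d t = d0 + (1 - r) * b t" using i by (simp add: algebra_simps)
    also have "\<dots> = d0 / r * (1 - (1 - r) * exp (- r * t))"
    proof -
      have bt: "b t = d0 / r - d0 / r * exp (- r * t)" using bsol t by simp
      show ?thesis unfolding bt using rpos by (simp add: field_simps)
    qed
    finally show "b t + d t = d0 / r * (1 - (1 - r) * exp (- r * t))" .
  qed
  have alt: "\<And>t. t \<ge> 0 \<Longrightarrow> b t + d t < d0 / r"
  proof -
    fix t :: real assume t: "t \<ge> 0"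
    have "0 < (1 - r) * exp (- r * t)" using rlt by simp
    hence "d0 / r * (1 - (1 - r) * exp (- r * t)) < d0 / r * 1"
      using d0 rpos by (intro mult_strict_left_mono) auto
    thus "b t + d t < d0 / r" using asol[OF t] by simp
  qed
  have part1: "\<forall>\<beta>. d0 \<le> \<beta> \<and> \<beta> < d0 / r \<longrightarrow>
            Inf {t. t \<ge> 0 \<and> b t + d t \<ge> \<beta>} = hilt_T \<beta> d0 \<Gamma> \<and>
            b (hilt_T \<beta> d0 \<Gamma>) + d (hilt_T \<beta> d0 \<Gamma>) = \<beta>"
  proof (intro allI impI, elim conjE)
    fix \<beta> assume b1: "d0 \<le> \<beta>" and b2: "\<beta> < d0 / r"
    define X where "X = (1 - \<beta> / d0 * r) / (1 - r)"
    have Tdef: "hilt_T \<beta> d0 \<Gamma> = - ln X / r"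
    proof -
      have "hilt_T \<beta> d0 \<Gamma> = 1 / r * ln ((1 - r) / (1 - \<beta> / d0 * r))"
        unfolding hilt_T_def r_def ..
      also have "(1 - r) / (1 - \<beta> / d0 * r) = inverse X" unfolding X_def by (simp add: field_simps)
      finally show ?thesis by (simp add: ln_inverse)
    qed
    have "\<beta> * r < d0" using b2 rpos by (simp add: field_simps)
    hence Xn: "0 < 1 - \<beta> / d0 * r" using d0 by (simp add: field_simps)
    have Xpos: "0 < X" unfolding X_def using Xn rlt by simp
    have "\<beta> / d0 * r \<ge> r" using b1 d0 rpos by (simp add: field_simps)
    hence Xle: "X \<le> 1" unfolding X_def using rlt by (simp add: field_simps)
    define T where "T = hilt_T \<beta> d0 \<Gamma>"
    have T0: "T \<ge> 0" unfolding T_def Tdef using Xpos Xle rpos by (simp add: divide_nonpos_pos)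
    have key: "\<And>t. t \<ge> 0 \<Longrightarrow> (\<beta> \<le> b t + d t) = (T \<le> t)"
    proof -
      fix t :: real assume t: "t \<ge> 0"
      have "(\<beta> \<le> b t + d t) = (\<beta> \<le> d0 / r * (1 - (1 - r) * exp (- r * t)))" using asol[OF t] by simp
      also have "\<dots> = (\<beta> * r / d0 \<le> 1 - (1 - r) * exp (- r * t))"
        using rpos d0 by (simp add: field_simps)
      also have "\<dots> = ((1 - r) * exp (- r * t) \<le> (1 - \<beta> / d0 * r))" by auto
      also have "\<dots> = (exp (- r * t) \<le> X)" unfolding X_def using rlt by (simp add: field_simps)
      also have "\<dots> = (- r * t \<le> ln X)" using Xpos by (metis exp_le_cancel_iff exp_ln)
      also have "\<dots> = (T \<le> t)" unfolding T_def Tdef using rpos by (simp add: field_simps, linarith)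
      finally show "(\<beta> \<le> b t + d t) = (T \<le> t)" .
    qed
    have S: "{t. t \<ge> 0 \<and> b t + d t \<ge> \<beta>} = {T..}" using key T0 by auto
    have aT: "b T + d T = \<beta>"
    proof -
      have "exp (- r * T) = X" unfolding T_def Tdef using rpos Xpos by simp
      hence "b T + d T = d0 / r * (1 - (1 - r) * X)" using asol[OF T0] by simp
      also have "\<dots> = \<beta>" unfolding X_def using rlt rpos d0 by (simp add: field_simps)
      finally show ?thesis .
    qed
    show "Inf {t. t \<ge> 0 \<and> b t + d t \<ge> \<beta>} = hilt_T \<beta> d0 \<Gamma> \<and>
            b (hilt_T \<beta> d0 \<Gamma>) + d (hilt_T \<beta> d0 \<Gamma>) = \<beta>"
      using S aT unfolding T_def by simp
  qed
  show ?thesis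
    using part1 alt unfolding r_def by (meson order_less_le_trans)
qed

end
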